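(* Let $0<s\le1$ and let $\beta\in(1,2)$ be such that the $\beta$-expansion of $1$ terminates; fix $m\in\mathbb N$, $\bar p\in[0,1]^{2^m}$ and $\epsilon>0$. Let $Q(s,\beta)=\beta^{-s}\sum_{i=0}^\infty(1-\beta^{-1})^{is}$. Suppose there are a strictly increasing sequence $(M_k)$ of natural numbers and $0\le c<1$ such that \[ N^s_\infty\big([0,1)\cap G^{\beta,m}_{\bar p}(M_k,\epsilon)\big)<\frac{c}{2Q(s,\beta)}\quad\text{for all }k. \] Then for each cylinder $C$ of $f_\beta$ there is $K_C$ such that $N^s_\infty\big(C\cap G^{\beta,m}_{\bar p}(M_k,\epsilon/2)\big)<c|C|^s$ for all $k>K_C$.
   Context: For $\beta\in(1,2)$ let $f_\beta(x)=\beta x \bmod 1$ on $[0,1)$ and $d_n(x,\beta)=\lfloor \beta f_\beta^n(x)\rfloor$, $n\ge0$; $(x_n)_{n\ge0}=(d_n(x,\beta))_{n\ge0}\in\{0,1\}^{\mathbb N}$ is the $\beta$-expansion of $x$. The expansion of $1$ terminates if $d(1,\beta)=j_0\dots j_{k-1}0^\infty$. A cylinder of generation $n$ is a nonempty set $[i_0\cdots i_{n-1}]=\{x\in[0,1): d_k(x,\beta)=i_k,\ 0\le k<n\}$. For a word $w$ of length $m$ and $n>m$, $\tau^\beta_w(x,n)=\#\{i\in\{0,\dots,n-m-1\}: x_i\dots x_{i+m-1}=w\}$; enumerating binary words of length $m$ as $w_1,\dots,w_{2^m}$, $G^{\beta,m}_{\bar p}(n,\epsilon)=\{x\in[0,1):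 p_{w_j}-\epsilon<\tau^\beta_{w_j}(x,n)/(n-m)<p_{w_j}+\epsilon,\ j=1,\dots,2^m\}$. $N^s_\infty(F)=\inf\{\sum_i|C_i|^s: F\subset\bigcup_iC_i\}$, the infimum over countable covers by cylinders of $f_\beta$. *)

theory Defs
  imports "HOL-Analysis.Analysis"
begin

definition fbeta :: "real \<Rightarrow> real \<Rightarrow> real" where
  "fbeta \<beta> x = frac (\<beta> * x)"

definition digit :: "real \<Rightarrow> nat \<Rightarrow> real \<Rightarrow> nat" where
  "digit \<beta> n x = nat \<lfloor>\<beta> * (fbeta \<beta> ^^ n) x\<rfloor>"

definition expansion_of_one_terminates :: "real \<Rightarrow> bool" where
  "expansion_of_one_terminates \<beta> \<longleftrightarrow> (\<exists>k. \<forall>n\<ge>k. digit \<beta> n 1 = 0)"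

definition cyl :: "real \<Rightarrow> nat list \<Rightarrow> real set" where
  "cyl \<beta> w = {x. 0 \<le> x \<and> x < 1 \<and> (\<forall>k<length w. digit \<beta> k x = w ! k)}"

definition is_cylinder :: "real \<Rightarrow> real set \<Rightarrow> bool" where
  "is_cylinder \<beta> C \<longleftrightarrow> (\<exists>w. C = cyl \<beta> w \<and> C \<noteq> {})"

definition tau :: "real \<Rightarrow> nat list \<Rightarrow> real \<Rightarrow> nat \<Rightarrow> nat" where
  "tau \<beta> w x n = card {i. i < n - length w \<and>
      (\<forall>j<length w. digit \<beta> (i + j) x = w ! j)}"

(* The set G^{beta,m}_p(n,eps); p assigns a frequency to each binary word of length m. *)
definition Gset :: "real \<Rightarrow> nat \<Rightarrow> (nat list \<Rightarrow> real) \<Rightarrow> nat \<Rightarrow> real \<Rightarrow> real set" where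
  "Gset \<beta> m p n eps = {x. 0 \<le> x \<and> x < 1 \<and>
     (\<forall>w. length w = m \<and> set w \<subseteq> {0, 1} \<longrightarrow>
        p w - eps < real (tau \<beta> w x n) / real (n - m) \<and>
        real (tau \<beta> w x n) / real (n - m) < p w + eps)}"

definition Ninf :: "real \<Rightarrow> real \<Rightarrow> real set \<Rightarrow> ennreal" where
  "Ninf \<beta> s F = (INF \<C> \<in> {\<C>. countable \<C> \<and> (\<forall>C\<in>\<C>. is_cylinder \<beta> C) \<and> F \<subseteq> \<Union>\<C>}.
      infsum (\<lambda>C. ennreal (diameter C powr s)) \<C>)"

definition Qconst :: "real \<Rightarrow> real \<Rightarrow> real" where
  "Qconst s \<beta> = \<beta> powr (-s) * (\<Sum>i. (1 - 1 / \<beta>) powr (real i * s))"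

end

theory Submission
  imports Defs
begin

lemma fbeta_range: "0 \<le> fbeta b x" "fbeta b x < 1"
  by (auto simp: fbeta_def frac_lt_1)

lemma fpow_range: assumes "0 \<le> x" "x < 1" shows "0 \<le> (fbeta b ^^ n) x" "(fbeta b ^^ n) x < 1"
  using assms by (cases n; simp add: fbeta_range)+

lemma fpow_Suc: "(fbeta b ^^ Suc i) x = b * (fbeta b ^^ i) x - \<lfloor>b * (fbeta b ^^ i) x\<rfloor>"
  by (simp add: fbeta_def frac_def)

lemma digit_shift: "digit b (n + j) x = digit b j ((fbeta b ^^ n) x)"
  by (simp add: digit_def add.commute[of n j] funpow_add)

lemma perturb:
  assumes "\<forall>i<N. \<lfloor>b * (fbeta b ^^ i) x + b^(Suc i) * e\<rfloor> = \<lfloor>b * (fbeta b ^^ i) x\<rfloor>"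
  shows "i \<le> N \<Longrightarrow> (fbeta b ^^ i) (x + e) = (fbeta b ^^ i) x + b^i * e"
proof (induction i)
  case 0 then show ?case by simp
next
  case (Suc i)
  then have IH: "(fbeta b ^^ i) (x + e) = (fbeta b ^^ i) x + b^i * e" by simp
  have eq: "b * (fbeta b ^^ i) (x + e) = b * (fbeta b ^^ i) x + b^(Suc i) * e"
    by (subst IH) (simp add: distrib_left mult.assoc)
  show ?case using assms Suc.prems
    by (simp only: fpow_Suc eq)
qed

lemma perturb_digit:
  assumes "\<forall>i<N. \<lfloor>b * (fbeta b ^^ i) x + b^(Suc i) * e\<rfloor> = \<lfloor>b * (fbeta b ^^ i) x\<rfloor>" "i < N"
  shows "digit b i (x + e) = digit b i x"
proof -
  have "b * (fbeta b ^^ i) (x + e) = b * (fbeta b ^^ i) x + b^(Suc i) * e"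
    using perturb[OF assms(1), of i] assms(2) by (simp add: algebra_simps)
  then show ?thesis using assms by (simp add: digit_def)
qed

lemma fpow_grow: fixes b x :: real assumes "1 < b" "0 \<le> x"
  shows "(fbeta b ^^ (j + d)) x \<le> b^d * (fbeta b ^^ j) x"
proof (induction d)
  case 0 then show ?case by simp
next
  case (Suc d)
  have nn: "0 \<le> (fbeta b ^^ (j+d)) x" using assms by (cases "j+d"; simp add: fbeta_range)
  have fl: "0 \<le> \<lfloor>b * (fbeta b ^^ (j+d)) x\<rfloor>" using nn assms by simp
  have "(fbeta b ^^ (j + Suc d)) x = b * (fbeta b ^^ (j+d)) x - \<lfloor>b * (fbeta b ^^ (j+d)) x\<rfloor>"
    using fpow_Suc[where b=b and i="j+d" and x=x] by simp
  also have "\<dots> \<le> b * (fbeta b ^^ (j+d)) x" using fl by simp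
  also have "\<dots> \<le> b * (b^d * (fbeta b ^^ j) x)" using Suc assms by simp
  finally show ?case by simp
qed


lemma cyl_bounded: "bounded (cyl b w)"
  by (rule bounded_subset[of "{0..1}"]) (auto simp: cyl_def)

lemma cyl_diam_ge: "x \<in> cyl b w \<Longrightarrow> y \<in> cyl b w \<Longrightarrow> \<bar>x - y\<bar> \<le> diameter (cyl b w)"
  using diameter_bounded_bound[OF cyl_bounded] by (simp add: dist_real_def)

lemma left_end:
  fixes b x :: real
  assumes b: "1 < b" and x: "x \<in> cyl b w"
  defines "a \<equiv> x - (fbeta b ^^ length w) x / b ^ length w"
  shows "a \<in> cyl b w" "(fbeta b ^^ length w) a = 0"
proof -
  let ?N = "length w"
  let ?y = "(fbeta b ^^ ?N) x"
  define e where "e = - ?y / b ^ ?N"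
  have x01: "0 \<le> x" "x < 1" using x by (auto simp: cyl_def)
  have bpos: "0 < b" using b by simp
  have cond: "\<forall>i<?N. \<lfloor>b * (fbeta b ^^ i) x + b^(Suc i) * e\<rfloor> = \<lfloor>b * (fbeta b ^^ i) x\<rfloor>"
  proof (intro allI impI)
    fix i assume i: "i < ?N"
    have eqN: "Suc i + (?N - Suc i) = ?N" using i by simp
    have g: "?y \<le> b^(?N - Suc i) * (fbeta b ^^ Suc i) x"
      using fpow_grow[OF b x01(1), of "Suc i" "?N - Suc i"] by (simp only: eqN)
    have ynn: "0 \<le> ?y" using fpow_range[OF x01] by simp
    have pw: "b^?N = b^(?N - Suc i) * b^(Suc i)"
      using eqN by (metis power_add mult.commute)
    have "b^(Suc i) * (?y / b^?N) \<le> (fbeta b ^^ Suc i) x"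
    proof -
      have "b^(Suc i) * (?y / b^?N) = ?y / b^(?N - Suc i)"
        using bpos by (simp add: pw field_simps)
      also have "\<dots> \<le> (fbeta b ^^ Suc i) x"
        using g bpos by (simp add: divide_le_eq mult.commute)
      finally show ?thesis .
    qed
    moreover have "0 \<le> b^(Suc i) * (?y / b^?N)" using ynn bpos by simp
    ultimately have "real_of_int \<lfloor>b * (fbeta b ^^ i) x\<rfloor> \<le> b * (fbeta b ^^ i) x + b^(Suc i) * e"
      "b * (fbeta b ^^ i) x + b^(Suc i) * e < real_of_int \<lfloor>b * (fbeta b ^^ i) x\<rfloor> + 1"
      unfolding e_def using fpow_Suc[where b=b and i=i and x=x] 
        real_of_int_floor_add_one_gt[of "b * (fbeta b ^^ i) x"]
      by (simp_all add: algebra_simps)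
    then show "\<lfloor>b * (fbeta b ^^ i) x + b^(Suc i) * e\<rfloor> = \<lfloor>b * (fbeta b ^^ i) x\<rfloor>"
      by (intro floor_unique) auto
  qed
  have aeq: "a = x + e" unfolding a_def e_def by simp
  have "?y \<le> b^?N * x" using fpow_grow[OF b x01(1), of 0 ?N] by simp
  then have "0 \<le> a" unfolding a_def using bpos by (simp add: field_simps)
  moreover have "a < 1"
  proof -
    have "0 \<le> ?y / b^?N" using fpow_range(1)[OF x01, where b=b and n="?N"] bpos by simp
    then show ?thesis unfolding a_def using x01 by linarith
  qed
  moreover have "\<forall>k<?N. digit b k a = w ! k"
    using perturb_digit[OF cond] x unfolding aeq by (auto simp: cyl_def)
  ultimately show "a \<in> cyl b w" by (simp add: cyl_def)
  show "(fbeta b ^^ ?N) a = 0"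
    unfolding aeq using perturb[OF cond, of ?N] bpos by (simp add: e_def)
qed


lemma cyl_ext:
  fixes b :: real
  assumes b: "1 < b" and ne: "cyl b u \<noteq> {}"
    and small: "diameter (cyl b u) < 1 / b ^ (length u + 1)"
  shows "cyl b (u @ [0]) = cyl b u"
proof
  show "cyl b (u @ [0]) \<subseteq> cyl b u"
    by (auto simp: cyl_def nth_append)
next
  show "cyl b u \<subseteq> cyl b (u @ [0])"
  proof
    fix x assume x: "x \<in> cyl b u"
    let ?N = "length u"
    let ?y = "(fbeta b ^^ ?N) x"
    have bpos: "0 < b" using b by simp
    have x01: "0 \<le> x" "x < 1" using x by (auto simp: cyl_def)
    have yn: "0 \<le> ?y" using fpow_range(1)[OF x01, where b=b and n="?N"] .
    have "\<bar>x - (x - ?y / b ^ ?N)\<bar> \<le> diameter (cyl b u)"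
      using cyl_diam_ge[OF x left_end(1)[OF b x]] .
    then have "?y / b ^ ?N < 1 / b ^ (?N + 1)" using small yn bpos by simp
    then have "?y < 1 / b" using bpos by (simp add: field_simps)
    then have "b * ?y < 1" using bpos by (simp add: field_simps)
    then have "\<lfloor>b * ?y\<rfloor> = 0" using yn bpos by (intro floor_unique) auto
    then have "digit b ?N x = 0" by (simp add: digit_def)
    then show "x \<in> cyl b (u @ [0])" using x
      by (auto simp: cyl_def nth_append less_Suc_eq)
  qed
qed

lemma cyl_diam_pos:
  fixes b :: real
  assumes b: "1 < b" and ne: "cyl b u \<noteq> {}"
  shows "0 < diameter (cyl b u)"
proof -
  let ?N = "length u"
  have bpos: "0 < b" using b by simp
  obtain x where x: "x \<in> cyl b u" using ne by auto
  define a where "a = x - (fbeta b ^^ ?N) x / b ^ ?N"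
  have a: "a \<in> cyl b u" using left_end(1)[OF b x] unfolding a_def .
  have a01: "0 \<le> a" "a < 1" using a by (auto simp: cyl_def)
  define S where "S = (\<lambda>j. 1 - (fbeta b ^^ j) a) ` {..?N}"
  define m where "m = Min S"
  have Sfin: "finite S" "S \<noteq> {}" unfolding S_def by auto
  have Spos: "\<forall>z\<in>S. 0 < z" unfolding S_def using fpow_range(2)[OF a01] by auto
  have mpos: "0 < m" unfolding m_def using Sfin Spos by simp
  have mle: "\<And>j. j \<le> ?N \<Longrightarrow> m \<le> 1 - (fbeta b ^^ j) a"
    unfolding m_def S_def by (rule Min_le) auto
  define h where "h = m / 2 / b ^ ?N"
  have hpos: "0 < h" unfolding h_def using mpos bpos by simp
  have hb: "\<And>j. j \<le> ?N \<Longrightarrow> b^j * h < 1 - (fbeta b ^^ j) a"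
  proof -
    fix j assume j: "j \<le> ?N"
    have "b^j \<le> b^?N" using j b by (simp add: power_increasing)
    then have "b^j * h \<le> b^?N * h" using hpos by simp
    also have "\<dots> = m / 2" unfolding h_def using bpos by simp
    also have "\<dots> < m" using mpos by simp
    finally show "b^j * h < 1 - (fbeta b ^^ j) a" using mle[OF j] by simp
  qed
  have cond: "\<forall>i<?N. \<lfloor>b * (fbeta b ^^ i) a + b^(Suc i) * h\<rfloor> = \<lfloor>b * (fbeta b ^^ i) a\<rfloor>"
  proof (intro allI impI)
    fix i assume i: "i < ?N"
    have "b^(Suc i) * h < 1 - (fbeta b ^^ Suc i) a" using hb[of "Suc i"] i by simp
    then have lt: "b * (fbeta b ^^ i) a + b^(Suc i) * h < real_of_int \<lfloor>b * (fbeta b ^^ i) a\<rfloor> + 1"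
      using fpow_Suc[where b=b and i=i and x=a] by simp
    have "0 \<le> b^(Suc i) * h" using hpos bpos by simp
    then have "real_of_int \<lfloor>b * (fbeta b ^^ i) a\<rfloor> \<le> b * (fbeta b ^^ i) a + b^(Suc i) * h"
      using of_int_floor_le[of "b * (fbeta b ^^ i) a"] by linarith
    then show "\<lfloor>b * (fbeta b ^^ i) a + b^(Suc i) * h\<rfloor> = \<lfloor>b * (fbeta b ^^ i) a\<rfloor>"
      using lt by (intro floor_unique) auto
  qed
  have "a + h < 1" using hb[of 0] by simp
  moreover have "0 \<le> a + h" using a01 hpos by simp
  ultimately have ah: "a + h \<in> cyl b u"
    using perturb_digit[OF cond] a by (auto simp: cyl_def)
  have "\<bar>(a + h) - a\<bar> \<le> diameter (cyl b u)" using cyl_diam_ge[OF ah a] .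
  then show ?thesis using hpos by simp
qed

lemma find_u_aux:
  fixes b :: real
  assumes b: "1 < b" and ne: "cyl b w \<noteq> {}"
  shows "\<exists>u. cyl b u = cyl b w \<and> (1 / b ^ (length u + 1) \<le> diameter (cyl b w) \<or> length w + d \<le> length u)"
proof (induction d)
  case 0 then show ?case by (intro exI[of _ w]) simp
next
  case (Suc d)
  then obtain u where u: "cyl b u = cyl b w"
    and h: "1 / b ^ (length u + 1) \<le> diameter (cyl b w) \<or> length w + d \<le> length u" by blast
  show ?case
  proof (cases "1 / b ^ (length u + 1) \<le> diameter (cyl b w)")
    case True then show ?thesis using u by blast
  next
    case False
    then have "cyl b (u @ [0]) = cyl b u" using cyl_ext[OF b] u ne by simp
    then show ?thesis using u h False by (intro exI[of _ "u @ [0]"]) auto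
  qed
qed

lemma find_u:
  fixes b :: real
  assumes b: "1 < b" and ne: "cyl b w \<noteq> {}"
  shows "\<exists>u. cyl b u = cyl b w \<and> 1 / b ^ (length u + 1) \<le> diameter (cyl b w)"
proof -
  have dpos: "0 < diameter (cyl b w)" using cyl_diam_pos[OF b ne] .
  obtain n where n: "(1/b)^n < diameter (cyl b w)"
    using real_arch_pow_inv[OF dpos, of "1/b"] b by auto
  obtain u where u: "cyl b u = cyl b w"
    and h: "1 / b ^ (length u + 1) \<le> diameter (cyl b w) \<or> length w + n \<le> length u"
    using find_u_aux[OF b ne, of n] by blast
  show ?thesis
  proof (cases "1 / b ^ (length u + 1) \<le> diameter (cyl b w)")
    case True then show ?thesis using u by blast
  next
    case False
    then have "n \<le> length u + 1" using h by simp
    then have "b^n \<le> b^(length u + 1)" using b by (intro power_increasing) auto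
    then have "1 / b ^ (length u + 1) \<le> (1/b)^n" using b by (simp add: power_one_over frac_le)
    then show ?thesis using n False by simp
  qed
qed


lemma cyl_append:
  fixes b :: real
  shows "x \<in> cyl b (u @ v) \<longleftrightarrow> x \<in> cyl b u \<and> (fbeta b ^^ length u) x \<in> cyl b v"
proof
  assume x: "x \<in> cyl b (u @ v)"
  then have x01: "0 \<le> x" "x < 1" by (auto simp: cyl_def)
  have "x \<in> cyl b u" using x by (auto simp: cyl_def nth_append)
  moreover have "\<forall>k<length v. digit b k ((fbeta b ^^ length u) x) = v ! k"
  proof (intro allI impI)
    fix k assume "k < length v"
    then have "digit b (length u + k) x = (u@v) ! (length u + k)" using x by (auto simp: cyl_def)
    then show "digit b k ((fbeta b ^^ length u) x) = v ! k" by (simp add: digit_shift nth_append)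
  qed
  ultimately show "x \<in> cyl b u \<and> (fbeta b ^^ length u) x \<in> cyl b v"
    using fpow_range[OF x01] by (auto simp: cyl_def)
next
  assume h: "x \<in> cyl b u \<and> (fbeta b ^^ length u) x \<in> cyl b v"
  have "\<forall>k<length (u @ v). digit b k x = (u @ v) ! k"
  proof (intro allI impI)
    fix k assume k: "k < length (u @ v)"
    show "digit b k x = (u @ v) ! k"
    proof (cases "k < length u")
      case True then show ?thesis using h by (auto simp: cyl_def nth_append)
    next
      case False
      then obtain j where j: "k = length u + j" by (metis le_add_diff_inverse not_less)
      then have "j < length v" using k by simp
      then show ?thesis using h j by (auto simp: cyl_def nth_append digit_shift)
    qed
  qed
  then show "x \<in> cyl b (u @ v)" using h by (auto simp: cyl_def)
qed

lemma expansion: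
  fixes b x :: real
  assumes b: "1 < b" and x: "0 \<le> x"
  shows "x = (\<Sum>j<n. real (digit b j x) / b^(Suc j)) + (fbeta b ^^ n) x / b^n"
proof (induction n)
  case 0 then show ?case by simp
next
  case (Suc n)
  have nn: "0 \<le> (fbeta b ^^ n) x" using x by (cases n; simp add: fbeta_range)
  have dg: "real (digit b n x) = real_of_int \<lfloor>b * (fbeta b ^^ n) x\<rfloor>"
    using nn b by (simp add: digit_def)
  have "(fbeta b ^^ n) x / b^n = real (digit b n x) / b^(Suc n) + (fbeta b ^^ Suc n) x / b^(Suc n)"
    using b by (simp add: fbeta_def frac_def dg field_simps)
  then show ?case using Suc by simp
qed

lemma cyl_diff:
  fixes b :: real
  assumes b: "1 < b" and x: "x \<in> cyl b u" and y: "y \<in> cyl b u"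
  shows "x - y = ((fbeta b ^^ length u) x - (fbeta b ^^ length u) y) / b ^ length u"
proof -
  have x0: "0 \<le> x" and y0: "0 \<le> y" using x y by (auto simp: cyl_def)
  have eq: "(\<Sum>j<length u. real (digit b j x) / b^(Suc j)) = (\<Sum>j<length u. real (digit b j y) / b^(Suc j))"
    using x y by (intro sum.cong) (auto simp: cyl_def)
  show ?thesis
    using expansion[OF b x0, of "length u"] expansion[OF b y0, of "length u"] eq
    by (simp add: diff_divide_distrib)
qed

lemma diam_append:
  fixes b :: real
  assumes b: "1 < b"
  shows "diameter (cyl b (u @ v)) \<le> diameter (cyl b v) / b ^ length u"
proof (rule diameter_le)
  show "cyl b (u @ v) \<noteq> {} \<or> 0 \<le> diameter (cyl b v) / b ^ length u"
    using diameter_ge_0[OF cyl_bounded] b by simp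
next
  fix x y assume x: "x \<in> cyl b (u @ v)" and y: "y \<in> cyl b (u @ v)"
  have xu: "x \<in> cyl b u" "(fbeta b ^^ length u) x \<in> cyl b v" using x cyl_append by blast+
  have yu: "y \<in> cyl b u" "(fbeta b ^^ length u) y \<in> cyl b v" using y cyl_append by blast+
  have "\<bar>(fbeta b ^^ length u) x - (fbeta b ^^ length u) y\<bar> \<le> diameter (cyl b v)"
    using cyl_diam_ge[OF xu(2) yu(2)] .
  then show "norm (x - y) \<le> diameter (cyl b v) / b ^ length u"
    using cyl_diff[OF b xu(1) yu(1)] b by (simp add: abs_divide divide_right_mono)
qed


lemma tau_shift:
  fixes b :: real
  shows "\<bar>real (tau b w x M) - real (tau b w ((fbeta b ^^ N) x) M)\<bar> \<le> real N"
proof -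
  define L where "L = M - length w"
  define P where "P = (\<lambda>i. \<forall>j<length w. digit b (i + j) x = w ! j)"
  define A where "A = {i. i < L \<and> P i}"
  define B where "B = {i. N \<le> i \<and> i < L + N \<and> P i}"
  have tx: "tau b w x M = card A" unfolding tau_def A_def P_def L_def by simp
  have "{i. i < L \<and> (\<forall>j<length w. digit b (i + j) ((fbeta b ^^ N) x) = w ! j)}
        = {i. i < L \<and> P (N + i)}"
    unfolding P_def by (simp add: digit_shift[symmetric] add.assoc)
  then have ty0: "tau b w ((fbeta b ^^ N) x) M = card {i. i < L \<and> P (N + i)}"
    unfolding tau_def L_def by simp
  have "B = (\<lambda>i. N + i) ` {i. i < L \<and> P (N + i)}"
  proof (intro set_eqI iffI)
    fix i assume "i \<in> B" then show "i \<in> (\<lambda>i. N + i) ` {i. i < L \<and> P (N + i)}"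
      by (intro image_eqI[of _ _ "i - N"]) (auto simp: B_def)
  next
    fix i assume "i \<in> (\<lambda>i. N + i) ` {i. i < L \<and> P (N + i)}" then show "i \<in> B" by (auto simp: B_def)
  qed
  then have "card B = card {i. i < L \<and> P (N + i)}" by (simp add: card_image)
  then have ty: "tau b w ((fbeta b ^^ N) x) M = card B" using ty0 by simp
  have fA: "finite A" and fB: "finite B" unfolding A_def B_def by auto
  have "A \<subseteq> B \<union> {..<N}" unfolding A_def B_def by auto
  then have "card A \<le> card (B \<union> {..<N})" by (intro card_mono) (auto simp: fB)
  also have "\<dots> \<le> card B + N" using card_Un_le[of B "{..<N}"] by simp
  finally have 1: "card A \<le> card B + N" .
  have "B \<subseteq> A \<union> {L..<L+N}" unfolding A_def B_def by auto
  then have "card B \<le> card (A \<union> {L..<L+N})" by (intro card_mono) (auto simp: fA)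
  also have "\<dots> \<le> card A + N" using card_Un_le[of A "{L..<L+N}"] by simp
  finally have 2: "card B \<le> card A + N" .
  show ?thesis unfolding tx ty using 1 2 by linarith
qed

lemma Gset_shift:
  fixes b :: real
  assumes x: "x \<in> Gset b m p M (eps / 2)" and eps: "0 < eps"
    and big: "2 * real N / eps < real (M - m)"
  shows "(fbeta b ^^ N) x \<in> Gset b m p M eps"
proof -
  have x01: "0 \<le> x" "x < 1" using x by (auto simp: Gset_def)
  define L where "L = real (M - m)"
  have Lpos: "0 < L" unfolding L_def using big eps by (smt (verit) divide_nonneg_pos of_nat_0_le_iff)
  have NL: "real N / L < eps / 2" using big Lpos eps unfolding L_def by (simp add: field_simps)
  have "\<forall>w. length w = m \<and> set w \<subseteq> {0, 1} \<longrightarrow>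
        p w - eps < real (tau b w ((fbeta b ^^ N) x) M) / L \<and>
        real (tau b w ((fbeta b ^^ N) x) M) / L < p w + eps"
  proof (intro allI impI)
    fix w :: "nat list" assume w: "length w = m \<and> set w \<subseteq> {0, 1}"
    let ?tx = "real (tau b w x M)" and ?ty = "real (tau b w ((fbeta b ^^ N) x) M)"
    have h: "p w - eps/2 < ?tx / L" "?tx / L < p w + eps/2"
      using x w unfolding Gset_def L_def by auto
    have d: "\<bar>?tx - ?ty\<bar> \<le> real N" by (rule tau_shift)
    have "\<bar>?tx / L - ?ty / L\<bar> = \<bar>?tx - ?ty\<bar> / L" using Lpos by (simp add: diff_divide_distrib[symmetric])
    also have "\<dots> \<le> real N / L" using d Lpos by (simp add: divide_right_mono)
    finally have "\<bar>?tx / L - ?ty / L\<bar> < eps / 2" using NL by linarith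
    then show "p w - eps < ?ty / L \<and> ?ty / L < p w + eps" using h by linarith
  qed
  then show ?thesis using fpow_range[OF x01] unfolding Gset_def L_def by auto
qed


lemma infsum_ennreal_SUP:
  fixes g :: "'a \<Rightarrow> ennreal"
  shows "infsum g A = (SUP F\<in>{F. finite F \<and> F \<subseteq> A}. sum g F)"
  by (rule nonneg_infsum_complete) simp

lemma Ninf_scale:
  fixes b s :: real
  assumes b: "1 < b" and s: "0 < s" and eps: "0 < eps"
    and big: "2 * real (length u) / eps < real (M - m)"
    and D: "countable \<D>" "\<forall>D\<in>\<D>. is_cylinder b D" "{0..<1} \<inter> Gset b m p M eps \<subseteq> \<Union>\<D>"
  shows "Ninf b s (cyl b u \<inter> Gset b m p M (eps / 2))
         \<le> ennreal ((1 / b ^ length u) powr s) * infsum (\<lambda>C. ennreal (diameter C powr s)) \<D>"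
proof -
  let ?N = "length u"
  let ?g = "\<lambda>C. ennreal (diameter C powr s)"
  let ?a = "ennreal ((1 / b ^ ?N) powr s)"
  define vv where "vv D = (SOME v. D = cyl b v)" for D
  have vv: "D = cyl b (vv D)" if "D \<in> \<D>" for D
  proof -
    have "\<exists>v. D = cyl b v" using D(2) that by (auto simp: is_cylinder_def)
    then show ?thesis unfolding vv_def by (rule someI_ex)
  qed
  define h where "h D = cyl b (u @ vv D)" for D
  define \<C> where "\<C> = h ` \<D> - {{}}"
  have cC: "countable \<C>" unfolding \<C>_def using D(1) by auto
  have cylC: "\<forall>C\<in>\<C>. is_cylinder b C" unfolding \<C>_def h_def is_cylinder_def by auto
  have cover: "cyl b u \<inter> Gset b m p M (eps / 2) \<subseteq> \<Union>\<C>"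
  proof
    fix x assume x: "x \<in> cyl b u \<inter> Gset b m p M (eps / 2)"
    have "(fbeta b ^^ ?N) x \<in> Gset b m p M eps" using Gset_shift[OF _ eps big] x by blast
    moreover have "(fbeta b ^^ ?N) x \<in> {0..<1}" using fpow_range[of x] x by (auto simp: cyl_def)
    ultimately obtain D where D1: "D \<in> \<D>" "(fbeta b ^^ ?N) x \<in> D" using D(3) by blast
    then have "x \<in> h D" unfolding h_def using cyl_append x vv[OF D1(1)] by blast
    then show "x \<in> \<Union>\<C>" unfolding \<C>_def using D1 by blast
  qed
  have "Ninf b s (cyl b u \<inter> Gset b m p M (eps / 2)) \<le> infsum ?g \<C>"
    unfolding Ninf_def using cC cylC cover by (intro INF_lower) auto
  also have "\<dots> \<le> ?a * infsum ?g \<D>"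
    unfolding infsum_ennreal_SUP[of _ \<C>]
  proof (rule SUP_least)
    fix F assume F: "F \<in> {F. finite F \<and> F \<subseteq> \<C>}"
    then have "F \<subseteq> h ` \<D>" unfolding \<C>_def by auto
    then obtain G where G: "G \<subseteq> \<D>" "finite G" "F = h ` G"
      using finite_subset_image[of F h \<D>] F by auto
    have "sum ?g F \<le> sum (?g \<circ> h) G" unfolding G(3) by (rule sum_image_le[OF G(2)]) simp
    also have "\<dots> \<le> sum (\<lambda>D. ?a * ?g D) G"
    proof (rule sum_mono)
      fix D assume "D \<in> G"
      then have DD: "D \<in> \<D>" using G by auto
      have "diameter (h D) \<le> diameter D / b ^ ?N"
        unfolding h_def using diam_append[OF b, of u "vv D"] vv[OF DD] by simp
      then have "diameter (h D) powr s \<le> (diameter D / b ^ ?N) powr s"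
        using diameter_ge_0[OF cyl_bounded] s unfolding h_def by (intro powr_mono2) auto
      also have "\<dots> = (1 / b ^ ?N) powr s * diameter D powr s"
        by (simp add: powr_mult[symmetric])
      finally show "(?g \<circ> h) D \<le> ?a * ?g D"
        by (simp add: ennreal_mult[symmetric] ennreal_leI)
    qed
    also have "\<dots> = ?a * sum ?g G" by (rule sum_distrib_left[symmetric])
    also have "\<dots> \<le> ?a * infsum ?g \<D>"
    proof (rule mult_left_mono)
      show "sum ?g G \<le> infsum ?g \<D>"
        unfolding infsum_ennreal_SUP[of _ \<D>] using G by (intro SUP_upper) auto
    qed simp
    finally show "sum ?g F \<le> ?a * infsum ?g \<D>" .
  qed
  finally show ?thesis .
qed


lemma Q_bound:
  fixes s b :: real
  assumes s: "0 < s" "s \<le> 1" and b: "1 < b" "b < 2"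
  shows "b powr s \<le> 2 * Qconst s b" "0 < Qconst s b"
proof -
  define r where "r = 1 - 1 / b"
  define q where "q = r powr s"
  have r: "0 < r" "r < 1" unfolding r_def using b by (auto simp: field_simps)
  have q: "0 < q" "q < 1" unfolding q_def using r s
    using powr_less_mono2[of s r 1] by auto
  have qr: "r \<le> q" unfolding q_def using powr_mono'[of s 1 r] r s by simp
  have terms: "(\<lambda>i. (1 - 1 / b) powr (real i * s)) = (\<lambda>i. q ^ i)"
  proof
    fix i :: nat
    have "(1 - 1 / b) powr (real i * s) = (r powr s) powr real i"
      unfolding r_def by (simp add: powr_powr mult.commute)
    also have "\<dots> = q ^ i" unfolding q_def using r by (simp add: powr_realpow)
    finally show "(1 - 1 / b) powr (real i * s) = q ^ i" .
  qed
  have Q: "Qconst s b = b powr (-s) * (1 / (1 - q))"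
    unfolding Qconst_def terms using suminf_geometric[of q] q by simp
  have bs: "0 < b powr s" using b by simp
  show "0 < Qconst s b" unfolding Q using q b by simp
  have "b powr s * b powr s = b powr (2 * s)" by (simp add: powr_add[symmetric])
  also have "\<dots> \<le> b powr 2" using b s by (intro powr_mono) auto
  also have "\<dots> = b^2" using b by (simp add: powr_realpow[of b 2, simplified])
  finally have bb: "b powr s * b powr s \<le> b^2" .
  have "b powr s * b powr s * (1 - q) \<le> b^2 * (1 - r)"
    using bb qr q by (intro mult_mono) auto
  also have "\<dots> = b" unfolding r_def using b by (simp add: power2_eq_square field_simps)
  finally have "b powr s * b powr s * (1 - q) \<le> 2" using b by simp
  then show "b powr s \<le> 2 * Qconst s b"
    unfolding Q using q bs by (simp add: powr_minus field_simps)
qed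


theorem mainTheorem15:
  fixes s \<beta> eps c :: real and m :: nat and p :: "nat list \<Rightarrow> real" and M :: "nat \<Rightarrow> nat"
  assumes "0 < s" and "s \<le> 1"
    and "1 < \<beta>" and "\<beta> < 2"
    and "expansion_of_one_terminates \<beta>"
    and "\<forall>w. length w = m \<and> set w \<subseteq> {0, 1} \<longrightarrow> 0 \<le> p w \<and> p w \<le> 1"
    and "0 < eps"
    and "strict_mono M"
    and "0 \<le> c" and "c < 1"
    and "\<forall>k. Ninf \<beta> s ({0..<1} \<inter> Gset \<beta> m p (M k) eps) < ennreal (c / (2 * Qconst s \<beta>))"
  shows "\<forall>C. is_cylinder \<beta> C \<longrightarrow>
           (\<exists>K. \<forall>k>K. Ninf \<beta> s (C \<inter> Gset \<beta> m p (M k) (eps / 2)) < ennreal (c * diameter C powr s))"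
proof (intro allI impI)
  fix C assume "is_cylinder \<beta> C"
  then obtain w where w: "C = cyl \<beta> w" "cyl \<beta> w \<noteq> {}" unfolding is_cylinder_def by auto
  obtain u where u: "cyl \<beta> u = C" and ud: "1 / \<beta> ^ (length u + 1) \<le> diameter C"
    using find_u[OF assms(3) w(2)] w(1) by auto
  let ?N = "length u"
  let ?Q = "Qconst s \<beta>"
  let ?d = "diameter C"
  have Qb: "\<beta> powr s \<le> 2 * ?Q" "0 < ?Q" using Q_bound assms(1-4) by auto
  have bpos: "0 < \<beta>" using assms(3) by simp
  have dpos: "0 < ?d" using ud bpos by (smt (verit) divide_pos_pos zero_less_power)
  define K where "K = m + nat \<lceil>2 * real ?N / eps\<rceil>"
  show "\<exists>K. \<forall>k>K. Ninf \<beta> s (C \<inter> Gset \<beta> m p (M k) (eps / 2)) < ennreal (c * ?d powr s)"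
  proof (intro exI allI impI)
    fix k assume k: "K < k"
    have "k \<le> M k" using seq_suble[OF assms(8)] .
    then have Mk: "K < M k" using k by simp
    have big: "2 * real ?N / eps < real (M k - m)"
    proof -
      have "2 * real ?N / eps \<le> real (nat \<lceil>2 * real ?N / eps\<rceil>)" by linarith
      also have "\<dots> < real (M k - m)" using Mk unfolding K_def by linarith
      finally show ?thesis .
    qed
    have "Ninf \<beta> s ({0..<1} \<inter> Gset \<beta> m p (M k) eps) < ennreal (c / (2 * ?Q))" using assms(11) by blast
    then obtain \<D> where D: "countable \<D>" "\<forall>D\<in>\<D>. is_cylinder \<beta> D"
        "{0..<1} \<inter> Gset \<beta> m p (M k) eps \<subseteq> \<Union>\<D>"
      and Dl: "infsum (\<lambda>C. ennreal (diameter C powr s)) \<D> < ennreal (c / (2 * ?Q))"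
      unfolding Ninf_def INF_less_iff by auto
    define X where "X = infsum (\<lambda>C. ennreal (diameter C powr s)) \<D>"
    define r where "r = enn2real X"
    have "X < top" using Dl unfolding X_def[symmetric] using ennreal_less_top order.strict_trans by blast
    then have Xr: "X = ennreal r" unfolding r_def by simp
    have r0: "0 \<le> r" unfolding r_def by simp
    have rl: "r < c / (2 * ?Q)" using Dl unfolding X_def[symmetric] Xr using r0 ennreal_less_iff by blast
    define A where "A = (1 / \<beta> ^ ?N) powr s"
    have A0: "0 \<le> A" unfolding A_def by simp
    have "Ninf \<beta> s (C \<inter> Gset \<beta> m p (M k) (eps / 2)) \<le> ennreal A * X"
      unfolding A_def X_def using Ninf_scale[OF assms(3) assms(1) assms(7) big D] u by simp
    also have "ennreal A * X = ennreal (A * r)" unfolding Xr using r0 A0 by (simp add: ennreal_mult)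
    also have "\<dots> < ennreal (c * ?d powr s)"
    proof (rule ennreal_lessI)
      have A: "A \<le> \<beta> powr s * ?d powr s"
      proof -
        have eq: "1 / \<beta> ^ ?N = \<beta> * (1 / \<beta> ^ (?N + 1))" using bpos by simp
        have "A = \<beta> powr s * (1 / \<beta> ^ (?N + 1)) powr s" unfolding A_def by (subst eq) (rule powr_mult)
        also have "\<dots> \<le> \<beta> powr s * ?d powr s"
          using ud bpos assms(1) by (intro mult_left_mono powr_mono2) auto
        finally show ?thesis .
      qed
      have ds: "0 < ?d powr s" using dpos by simp
      have bs: "0 < \<beta> powr s" using bpos by simp
      have "A * r \<le> \<beta> powr s * ?d powr s * r" using A r0 by (simp add: mult_right_mono)
      also have "\<dots> < \<beta> powr s * ?d powr s * (c / (2 * ?Q))" using rl ds bs by (intro mult_strict_left_mono) auto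
      also have "\<dots> = ?d powr s * c * (\<beta> powr s / (2 * ?Q))" by (simp add: field_simps)
      also have "\<dots> \<le> ?d powr s * c * 1"
        using Qb ds assms(9) by (intro mult_left_mono) (auto simp: divide_le_eq)
      finally show "A * r < c * ?d powr s" by (simp add: mult.commute)
      moreover have "0 \<le> A * r" using A0 r0 by simp
      ultimately show "0 < c * ?d powr s" by linarith
    qed
    finally show "Ninf \<beta> s (C \<inter> Gset \<beta> m p (M k) (eps / 2)) < ennreal (c * ?d powr s)" .
  qed
qed

end
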